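(* Let $X\subseteq\mathbb{R}^n$ be an open bounded convex set. If $U$ is a non-empty convex subset of $X$ which is closed in $X$ and homeomorphic to $\mathbb{R}^m$, then $U=X\cap A$ for some $m$-dimensional affine subspace $A$ of $\mathbb{R}^n$. *)

theory Defs
  imports "HOL-Analysis.Analysis"
begin

text \<open>The Euclidean space of dimension m, for an arbitrary natural number m
(including m = 0), realised as the finitely supported sequences
nat => real vanishing from index m on, with the subspace topology of the
product topology on nat => real (the standard topology instance on function
types).  This is homeomorphic (indeed isometric) to real^m.\<close>
definition Rspace :: "nat \<Rightarrow> (nat \<Rightarrow> real) set" where
  "Rspace m = {x. \<forall>i\<ge>m. x i = 0}"

end

theory Submission
  imports Defs "HOL-Homology.Homology"
begin

lemma Rspace_Euclidean: "top_of_set (Rspace m) = Euclidean_space m"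
  by (simp add: Rspace_def Euclidean_space_def euclidean_product_topology)

lemma U_hom_E:
  assumes "U homeomorphic Rspace m"
  shows "top_of_set U homeomorphic_space Euclidean_space m"
  using assms by (metis Rspace_Euclidean homeomorphic_space_iff_homeomorphic)

lemma dim_bound:
  fixes U :: "'a::euclidean_space set"
  assumes "top_of_set U homeomorphic_space Euclidean_space m"
  shows "m \<le> DIM('a)"
proof (rule ccontr)
  assume "\<not> m \<le> DIM('a)"
  then have le: "Suc DIM('a) \<le> m" by simp
  have sub: "Euclidean_space (Suc DIM('a)) = subtopology (Euclidean_space m) (topspace (Euclidean_space (Suc DIM('a))))"
    by (metis Euclidean_space_def le inf.absorb_iff2 subset_Euclidean_space subtopology_subtopology topspace_Euclidean_space)
  have "top_of_set (UNIV::('a\<times>real) set) homeomorphic_space Euclidean_space (Suc DIM('a))"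
    using homeomorphic_subspace_Euclidean_space[of "UNIV::('a\<times>real) set" "Suc DIM('a)"] by (simp add: dim_UNIV)
  then obtain k k' where k: "homeomorphic_maps (top_of_set (UNIV::('a\<times>real) set)) (Euclidean_space (Suc DIM('a))) k k'"
    unfolding homeomorphic_space_def by blast
  obtain f f' where f: "homeomorphic_maps (Euclidean_space m) (top_of_set U) f f'"
    using assms homeomorphic_space_sym unfolding homeomorphic_space_def by blast
  have ck: "continuous_map (top_of_set (UNIV::('a\<times>real) set)) (Euclidean_space m) k"
    using k sub unfolding homeomorphic_maps_def
    by (metis continuous_map_in_subtopology)
  have cf: "continuous_map (Euclidean_space m) (top_of_set U) f"
    using f homeomorphic_maps_def by blast
  have cfk: "continuous_map (top_of_set UNIV) (top_of_set U) (f \<circ> k)"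
    using continuous_map_compose[OF ck cf] .
  then have contf: "continuous_on UNIV (f \<circ> k)"
    unfolding continuous_map_subtopology_eu by blast
  have injk: "inj k"
    using k unfolding homeomorphic_maps_def by (metis inj_on_inverseI UNIV_I topspace_euclidean_subtopology)
  have kim: "k ` UNIV \<subseteq> topspace (Euclidean_space m)"
    using ck continuous_map_image_subset_topspace by fastforce
  have injf: "inj_on f (topspace (Euclidean_space m))"
    using f unfolding homeomorphic_maps_def by (metis inj_on_inverseI)
  have "inj (f \<circ> k)"
    using injk injf kim by (meson comp_inj_on inj_on_subset subset_refl inj_on_imageI2 inj_on_image_iff)
  then have "DIM('a\<times>real) \<le> DIM('a)"
    using invariance_of_dimension[OF contf open_UNIV] by auto
  then show False by simp
qed

theorem lemma5p3:
  fixes X U :: "'a::euclidean_space set" and m :: nat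
  assumes "open X" and "bounded X" and "convex X"
    and "U \<noteq> {}" and "convex U" and "U \<subseteq> X"
    and "closedin (top_of_set X) U"
    and "U homeomorphic Rspace m"
  shows "\<exists>A. affine A \<and> aff_dim A = int m \<and> U = X \<inter> A"
proof -
  have hE: "top_of_set U homeomorphic_space Euclidean_space m"
    using U_hom_E[OF assms(8)] .
  have mle: "m \<le> dim (UNIV::'a set)"
    using dim_bound[OF hE] by (simp add: dim_UNIV)
  obtain S :: "'a set" where S: "subspace S" "dim S = m"
    using choose_subspace_of_subspace[OF mle] by blast
  have "top_of_set S homeomorphic_space Euclidean_space m"
    using S homeomorphic_subspace_Euclidean_space by blast
  then have "top_of_set S homeomorphic_space top_of_set U"
    using hE homeomorphic_space_sym homeomorphic_space_trans by blast
  then have "S homeomorphic U" by simp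
  then obtain f g where fg: "homeomorphism S U f g"
    unfolding homeomorphic_def by blast
  define A where "A = affine hull U"
  have affA: "affine A" by (simp add: A_def)
  have affS: "affine S" using S subspace_imp_affine by blast
  have adS: "aff_dim S = int m" using S aff_dim_subspace by metis
  have ri: "rel_interior U \<noteq> {}"
    using assms(4,5) rel_interior_eq_empty by blast
  have "aff_dim A \<le> aff_dim S"
  proof (rule invariance_of_dimension_affine_sets[of A "rel_interior U" S g])
    show "openin (top_of_set A) (rel_interior U)"
      by (simp add: A_def openin_rel_interior)
    show "continuous_on (rel_interior U) g"
      by (rule continuous_on_subset[OF homeomorphism_cont2[OF fg] rel_interior_subset])
    show "g ` rel_interior U \<subseteq> S"
      using homeomorphism_image2[OF fg] rel_interior_subset by blast
    show "inj_on g (rel_interior U)"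
    proof -
      have "inj_on g U" 
      proof (rule inj_onI)
        fix x y assume "x \<in> U" "y \<in> U" "g x = g y"
        then have "f (g x) = f (g y)" by simp
        then show "x = y" using homeomorphism_apply2[OF fg] \<open>x \<in> U\<close> \<open>y \<in> U\<close> by simp
      qed
      then show ?thesis by (rule inj_on_subset) (rule rel_interior_subset)
    qed
  qed (simp_all only: affA affS ri not_False_eq_True)
  have opU: "openin (top_of_set A) U"
  proof -
    have "openin (top_of_set A) (f ` S)"
    proof (rule invariance_of_domain_affine_sets[of S S A f])
      show "continuous_on S f" by (rule homeomorphism_cont1[OF fg])
      show "f ` S \<subseteq> A" unfolding homeomorphism_image1[OF fg] A_def by (rule hull_subset)
      show "inj_on f S" 
    proof (rule inj_onI)
      fix x y assume "x \<in> S" "y \<in> S" "f x = f y"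
      then have "g (f x) = g (f y)" by simp
      then show "x = y" using homeomorphism_apply1[OF fg] \<open>x \<in> S\<close> \<open>y \<in> S\<close> by simp
    qed
    qed (rule openin_subtopology_self affS affA \<open>aff_dim A \<le> aff_dim S\<close>)+
    moreover have "f ` S = U" using homeomorphism_image1[OF fg] .
    ultimately show ?thesis by (simp only:)
  qed
  have "aff_dim S \<le> aff_dim A"
  proof (rule invariance_of_dimension_affine_sets[of S S A f])
    show "continuous_on S f" by (rule homeomorphism_cont1[OF fg])
    show "f ` S \<subseteq> A" unfolding homeomorphism_image1[OF fg] A_def by (rule hull_subset)
    show "inj_on f S" 
    proof (rule inj_onI)
      fix x y assume "x \<in> S" "y \<in> S" "f x = f y"
      then have "g (f x) = g (f y)" by simp
      then show "x = y" using homeomorphism_apply1[OF fg] \<open>x \<in> S\<close> \<open>y \<in> S\<close> by simp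
    qed
    show "S \<noteq> {}" using subspace_0[OF S(1)] by blast
  qed (rule openin_subtopology_self affS affA)+
  then have dimA: "aff_dim A = int m"
    using \<open>aff_dim A \<le> aff_dim S\<close> adS by linarith
  have UXA: "U \<subseteq> X \<inter> A"
    using assms(6) hull_subset[of U affine] unfolding A_def by (rule Int_greatest)
  have conn: "connected (X \<inter> A)"
    by (simp add: affA affine_imp_convex assms(3) convex_Int convex_connected)
  have o2: "openin (top_of_set (X \<inter> A)) U"
    using openin_subset_trans[OF opU UXA inf_le2] .
  have c2: "closedin (top_of_set (X \<inter> A)) U"
    using closedin_subset_trans[OF assms(7) UXA inf_le1] .
  have "U = X \<inter> A"
  proof -
    have "U = {} \<or> U = X \<inter> A"
      using conn o2 c2 unfolding connected_clopen by blast
    then show ?thesis using assms(4) by blast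
  qed
  then show ?thesis using affA dimA by (intro exI[of _ A]) simp
qed

end
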